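(* Let $q$ be a prime power, $n,r$ integers with $r\le\lfloor n/2\rfloor$, $0<\rho<r$, and let $\mathcal{C}\subseteq E_r(q,n)$ have covering radius $\rho$. Let $\mathcal{A} = \{U\in E_r(q,n): d_{\mathrm{I}}(U,\mathcal{C}) = \rho\}$ and $\mathcal{Z} = \{Z\in E_r(q,n): E_{\mathcal{C}}(\{Z\})\ge 1\}$. Then for every $U\in\mathcal{A}\setminus\mathcal{Z}$, $E_{\mathcal{C}}(B_1(U))\ge\epsilon$, where $\epsilon = \left\lceil\frac{b_\rho}{c_{\rho+1}}\right\rceil c_{\rho+1} - b_\rho$.
   Context: $E_r(q,n)$ is the set of $r$-dimensional subspaces of $\mathrm{GF}(q)^n$ with injection distance $d_{\mathrm{I}}(U,V)=\dim(U+V)-\min\{\dim U,\dim V\}$; $d_{\mathrm{I}}(U,\mathcal{C}) = \min_{C\in\mathcal{C}}d_{\mathrm{I}}(U,C)$; $B_t(U)=\{V\in E_r(q,n): d_{\mathrm{I}}(U,V)\le t\}$. The covering radius of $\mathcal{C}$ is $\max_U d_{\mathrm{I}}(U,\mathcal{C})$. For $V\subseteq E_r(q,n)$, the excess of $\mathcal{C}$ on $V$ is $E_{\mathcal{C}}(V) = \sum_{C\in\mathcal{C}}|B_\rho(C)\cap V| - |V|$. ${m\brack k}=\prod_{i=0}^{k-1}\frac{q^m-q^i}{q^k-q^i}$; $c_j={j\brack1}^2$ and $b_j = q^{2j+1}{r-j\brack1}{n-r-j\brack1}$. *)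

theory Defs
  imports "HOL-Analysis.Analysis"
begin

text \<open>Ambient space GF(q)^n is modelled as 'a^'n with 'a a finite field
 (q = CARD('a)) and n = CARD('n).\<close>

definition Er :: "nat \<Rightarrow> ('a::{finite,field}^'n::finite) set set" where
  "Er r = {U. vec.subspace U \<and> vec.dim U = r}"

definition dI :: "('a::{finite,field}^'n::finite) set \<Rightarrow> ('a^'n) set \<Rightarrow> nat" where
  "dI U V = vec.dim (vec.span (U \<union> V)) - min (vec.dim U) (vec.dim V)"

definition dIC :: "('a::{finite,field}^'n::finite) set \<Rightarrow> ('a^'n) set set \<Rightarrow> nat" where
  "dIC U C = Min ((\<lambda>X. dI U X) ` C)"

definition ballI :: "nat \<Rightarrow> nat \<Rightarrow> ('a::{finite,field}^'n::finite) set \<Rightarrow> ('a^'n) set set" where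
  "ballI r t U = {V \<in> Er r. dI U V \<le> t}"

definition covering_radius :: "nat \<Rightarrow> ('a::{finite,field}^'n::finite) set set \<Rightarrow> nat" where
  "covering_radius r C = Max ((\<lambda>U. dIC U C) ` Er r)"

definition excess :: "nat \<Rightarrow> nat \<Rightarrow> ('a::{finite,field}^'n::finite) set set \<Rightarrow> ('a^'n) set set \<Rightarrow> int" where
  "excess r \<rho> C V = (\<Sum>X\<in>C. int (card (ballI r \<rho> X \<inter> V))) - int (card V)"

definition gbin :: "nat \<Rightarrow> nat \<Rightarrow> nat \<Rightarrow> real" where
  "gbin q m k = (\<Prod>i<k. (real q ^ m - real q ^ i) / (real q ^ k - real q ^ i))"

definition cc :: "nat \<Rightarrow> nat \<Rightarrow> real" where
  "cc q j = (gbin q j 1)^2"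

definition bb :: "nat \<Rightarrow> nat \<Rightarrow> nat \<Rightarrow> nat \<Rightarrow> real" where
  "bb q n r j = real q ^ (2*j+1) * gbin q (r-j) 1 * gbin q (n-r-j) 1"

end

theory Submission
  imports Defs
begin


lemma card_span_indep:
  fixes B :: "('a::{finite,field}^'n::finite) set"
  assumes "vec.independent B"
  shows "card (vec.span B) = CARD('a) ^ card B"
proof -
  have fin: "finite B" using assms vec.finiteI_independent by blast
  show ?thesis using fin assms
  proof (induction B rule: finite_induct)
    case empty then show ?case by simp
  next
    case (insert x F)
    have "vec.independent F \<and> x \<notin> vec.span F"
      using insert.prems insert.hyps(2) unfolding vec.independent_insert[of x F] by simp
    then have indF: "vec.independent F" and xn: "x \<notin> vec.span F" by auto
    have "vec.span (insert x F) = (\<lambda>(a,t). a *s x + t) ` (UNIV \<times> vec.span F)"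
    proof (rule set_eqI, rule iffI)
      fix y assume "y \<in> vec.span (insert x F)"
      then obtain k where "y - k *s x \<in> vec.span F" using vec.span_breakdown_eq by blast
      then show "y \<in> (\<lambda>(a,t). a *s x + t) ` (UNIV \<times> vec.span F)"
        by (intro image_eqI[of _ _ "(k, y - k *s x)"]) auto
    next
      fix y assume "y \<in> (\<lambda>(a,t). a *s x + t) ` (UNIV \<times> vec.span F)"
      then obtain a t where y: "y = a *s x + t" "t \<in> vec.span F" by auto
      have "a *s x \<in> vec.span (insert x F)" by (intro vec.span_scale vec.span_base) simp
      moreover have "t \<in> vec.span (insert x F)" using y(2) vec.span_mono[of F "insert x F"] by blast
      ultimately show "y \<in> vec.span (insert x F)" unfolding y(1) by (rule vec.span_add)
    qed
    moreover have "inj_on (\<lambda>(a,t). a *s x + t) (UNIV \<times> vec.span F)"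
    proof (rule inj_onI, clarify)
      fix a t b s assume t: "t \<in> vec.span F" and s: "s \<in> vec.span F" and eq: "a *s x + t = b *s x + s"
      have "(a - b) *s x = s - t" using eq by (simp add: algebra_simps vec.scale_left_diff_distrib)
      moreover have "s - t \<in> vec.span F" using s t vec.span_diff by blast
      ultimately have ab: "a = b"
      proof (rule_tac ccontr)
        assume st: "(a - b) *s x = s - t" "s - t \<in> vec.span F" and ne: "a \<noteq> b"
        have iv: "inverse (a - b) * (a - b) = 1" using ne by simp
        have "x = inverse (a - b) *s ((a - b) *s x)" by (simp only: vec.scale_scale iv vec.scale_one)
        also have "\<dots> \<in> vec.span F" unfolding st(1) by (rule vec.span_scale[OF st(2)])
        finally show False using xn by simp
      qed
      then show "a = b \<and> t = s" using eq by simp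
    qed
    ultimately have "card (vec.span (insert x F)) = card (UNIV :: 'a set) * card (vec.span F)"
      by (simp add: card_image card_cartesian_product)
    then show ?case using insert indF by simp
  qed
qed

lemma card_subspace:
  fixes S :: "('a::{finite,field}^'n::finite) set"
  assumes "vec.subspace S"
  shows "card S = CARD('a) ^ vec.dim S"
proof -
  obtain B where "finite B" "B \<subseteq> S" "vec.independent B" "vec.span B = S" "card B = vec.dim S"
    using vec.basis_subspace_exists[OF assms] by metis
  then show ?thesis using card_span_indep by metis
qed

lemma modular:
  fixes A B :: "('a::{finite,field}^'n::finite) set"
  assumes "vec.subspace A" "vec.subspace B"
  shows "vec.dim (vec.span (A \<union> B)) + vec.dim (A \<inter> B) = vec.dim A + vec.dim B"
proof -
  have "vec.span A = A" "vec.span B = B" using assms by auto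
  note e = this
  show ?thesis using vec.dim_sums_Int[OF assms] unfolding vec.span_Un e .
qed

lemma dimUNIV: "vec.dim (UNIV :: ('a::{finite,field}^'n::finite) set) = CARD('n)"
  using vec.dim_UNIV card_cart_basis by metis


definition lns :: "('a::{finite,field}^'n::finite) set \<Rightarrow> ('a^'n) set \<Rightarrow> ('a^'n) set set" where
  "lns W Y = {V. vec.subspace V \<and> W \<subseteq> V \<and> V \<subseteq> Y \<and> vec.dim V = vec.dim W + 1}"

definition hyps :: "('a::{finite,field}^'n::finite) set \<Rightarrow> ('a^'n) set \<Rightarrow> ('a^'n) set set" where
  "hyps I U = {W. vec.subspace W \<and> I \<subseteq> W \<and> W \<subseteq> U \<and> vec.dim W + 1 = vec.dim U}"

lemma gbin1: "gbin q m 1 = (real q ^ m - 1) / (real q - 1)"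
  by (simp add: gbin_def)

lemma q_ge2: "CARD('a::{finite,field}) \<ge> 2"
proof -
  have "card {0::'a, 1} = 2" by simp
  moreover have "card {0::'a, 1} \<le> CARD('a)" by (rule card_mono) auto
  ultimately show ?thesis by simp
qed

lemma dim_insert_sub:
  fixes W :: "('a::{finite,field}^'n::finite) set"
  assumes "vec.subspace W" "x \<notin> W"
  shows "vec.dim (vec.span (insert x W)) = vec.dim W + 1"
proof -
  have xs: "x \<notin> vec.span W" using assms vec.span_eq_iff[of W] by metis
  then show ?thesis using vec.dim_insert[of x W] by simp
qed

lemma sub_eq:
  fixes A B :: "('a::{finite,field}^'n::finite) set"
  assumes "vec.subspace A" "vec.subspace B" "A \<subseteq> B" "vec.dim B \<le> vec.dim A"
  shows "A = B"
  using vec.subspace_dim_equal assms by blast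

lemma lns_count:
  fixes W Y :: "('a::{finite,field}^'n::finite) set"
  assumes sW: "vec.subspace W" and sY: "vec.subspace Y" and WY: "W \<subseteq> Y"
  shows "card (lns W Y) * (CARD('a)^(vec.dim W + 1) - CARD('a)^vec.dim W)
         = CARD('a)^vec.dim Y - CARD('a)^vec.dim W"
proof -
  let ?q = "CARD('a)"
  have key: "V = vec.span (insert x W)" if "V \<in> lns W Y" "x \<in> V" "x \<notin> W" for V x
  proof -
    have V: "vec.subspace V" "W \<subseteq> V" "vec.dim V = vec.dim W + 1" using that(1) by (auto simp: lns_def)
    have "vec.span (insert x W) \<subseteq> V" using V that by (intro vec.span_minimal) auto
    moreover have "vec.dim (vec.span (insert x W)) = vec.dim V" using dim_insert_sub[OF sW that(3)] V by simp
    ultimately show ?thesis using sub_eq[of "vec.span (insert x W)" V] V by auto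
  qed
  have eq: "Y - W = (\<Union>V\<in>lns W Y. V - W)"
  proof
    show "Y - W \<subseteq> (\<Union>V\<in>lns W Y. V - W)"
    proof
      fix x assume x: "x \<in> Y - W"
      have "vec.span (insert x W) \<subseteq> Y" using x WY sY by (intro vec.span_minimal) auto
      then have "vec.span (insert x W) \<in> lns W Y"
        unfolding lns_def using x dim_insert_sub[OF sW, of x] vec.span_superset[of "insert x W"]
        by auto
      moreover have "x \<in> vec.span (insert x W) - W" using x vec.span_base[of x "insert x W"] by auto
      ultimately show "x \<in> (\<Union>V\<in>lns W Y. V - W)" by blast
    qed
  next
    show "(\<Union>V\<in>lns W Y. V - W) \<subseteq> Y - W" by (auto simp: lns_def)
  qed
  have "card (Y - W) = (\<Sum>V\<in>lns W Y. card (V - W))"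
    unfolding eq
  proof (rule card_UN_disjoint)
    show "finite (lns W Y)" by simp
    show "\<forall>i\<in>lns W Y. finite (i - W)" by simp
    show "\<forall>i\<in>lns W Y. \<forall>j\<in>lns W Y. i \<noteq> j \<longrightarrow> (i - W) \<inter> (j - W) = {}"
    proof (intro ballI impI)
      fix i j assume i: "i \<in> lns W Y" and j: "j \<in> lns W Y" and ij: "i \<noteq> j"
      show "(i - W) \<inter> (j - W) = {}"
      proof (rule ccontr)
        assume "(i - W) \<inter> (j - W) \<noteq> {}"
        then obtain x where "x \<in> i" "x \<in> j" "x \<notin> W" by blast
        then have "i = vec.span (insert x W)" "j = vec.span (insert x W)" using key i j by auto
        then show False using ij by simp
      qed
    qed
  qed
  also have "\<dots> = (\<Sum>V\<in>lns W Y. ?q^(vec.dim W + 1) - ?q^vec.dim W)"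
  proof (rule sum.cong[OF refl])
    fix V assume V: "V \<in> lns W Y"
    then have "vec.subspace V" "W \<subseteq> V" "vec.dim V = vec.dim W + 1" by (auto simp: lns_def)
    then have "card (V - W) = card V - card W" by (intro card_Diff_subset) auto
    then show "card (V - W) = ?q^(vec.dim W + 1) - ?q^vec.dim W"
      using card_subspace[OF \<open>vec.subspace V\<close>] card_subspace[OF sW] \<open>vec.dim V = vec.dim W + 1\<close> by simp
  qed
  also have "\<dots> = card (lns W Y) * (?q^(vec.dim W + 1) - ?q^vec.dim W)" by simp
  finally have cc: "card (Y - W) = card (lns W Y) * (?q^(vec.dim W + 1) - ?q^vec.dim W)" .
  have "card (Y - W) = card Y - card W" using WY by (intro card_Diff_subset) auto
  then show ?thesis using cc card_subspace[OF sY] card_subspace[OF sW] by simp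
qed

lemma lns_count_real:
  fixes W Y :: "('a::{finite,field}^'n::finite) set"
  assumes sW: "vec.subspace W" and sY: "vec.subspace Y" and WY: "W \<subseteq> Y"
  shows "real (card (lns W Y)) = gbin CARD('a) (vec.dim Y - vec.dim W) 1"
proof -
  let ?q = "CARD('a)"
  have q2: "?q \<ge> 2" by (rule q_ge2)
  have le: "vec.dim W \<le> vec.dim Y" using WY vec.dim_subset by blast
  have p1: "?q^vec.dim W \<le> ?q^(vec.dim W + 1)" using q2 by (intro power_increasing) auto
  have p2: "?q^vec.dim W \<le> ?q^vec.dim Y" using q2 le by (intro power_increasing) auto
  have "real (card (lns W Y)) * (real ?q^(vec.dim W + 1) - real ?q^vec.dim W)
        = real ?q^vec.dim Y - real ?q^vec.dim W"
    using arg_cong[OF lns_count[OF assms], of real] p1 p2 by (simp add: of_nat_diff)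
  moreover have "real ?q^vec.dim Y = real ?q^vec.dim W * real ?q^(vec.dim Y - vec.dim W)"
    using le by (simp add: power_add[symmetric])
  ultimately have e1: "real ?q^vec.dim W * (real (card (lns W Y)) * (real ?q - 1))
        = real ?q^vec.dim W * (real ?q^(vec.dim Y - vec.dim W) - 1)"
    by (simp add: algebra_simps)
  have pos: "real ?q^vec.dim W > 0" "real ?q - 1 > 0" using q2 by auto
  have "real (card (lns W Y)) * (real ?q - 1) = real ?q^(vec.dim Y - vec.dim W) - 1"
    using e1 pos(1) by simp
  then show ?thesis unfolding gbin1 using \<open>real ?q - 1 > 0\<close> by (simp add: eq_divide_eq)
qed

lemma hyps_count:
  fixes I U :: "('a::{finite,field}^'n::finite) set"
  shows "vec.subspace I \<Longrightarrow> vec.subspace U \<Longrightarrow> I \<subseteq> U \<Longrightarrow> vec.dim U = vec.dim I + m \<Longrightarrow> 1 \<le> m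
    \<Longrightarrow> real (card (hyps I U)) = gbin CARD('a) m 1"
proof (induction m arbitrary: I)
  case 0 then show ?case by simp
next
  case (Suc m)
  let ?q = "CARD('a)"
  have q2: "?q \<ge> 2" by (rule q_ge2)
  show ?case
  proof (cases "m = 0")
    case True
    have "hyps I U = {I}"
    proof
      show "hyps I U \<subseteq> {I}"
      proof
        fix W assume "W \<in> hyps I U"
        then have "vec.subspace W" "I \<subseteq> W" "vec.dim W \<le> vec.dim I" using Suc.prems True by (auto simp: hyps_def)
        then show "W \<in> {I}" using sub_eq[of I W] Suc.prems by auto
      qed
      show "{I} \<subseteq> hyps I U" using Suc.prems True by (auto simp: hyps_def)
    qed
    then show ?thesis using True q2 by (simp add: gbin_def)
  next
    case False
    let ?P = "SIGMA W:hyps I U. lns I W"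
    let ?Q = "SIGMA L:lns I U. hyps L U"
    have "?P = (\<lambda>(L,W). (W,L)) ` ?Q"
      by (auto simp: hyps_def lns_def image_iff)
    moreover have "inj_on (\<lambda>(L,W). (W,L)) ?Q" by (auto simp: inj_on_def)
    ultimately have cPQ: "card ?P = card ?Q" by (simp add: card_image)
    have "real (card ?P) = (\<Sum>W\<in>hyps I U. real (card (lns I W)))" by simp
    also have "\<dots> = (\<Sum>W\<in>hyps I U. gbin ?q m 1)"
    proof (rule sum.cong[OF refl])
      fix W assume "W \<in> hyps I U"
      then have "vec.subspace W" "I \<subseteq> W" "vec.dim W = vec.dim I + m" using Suc.prems by (auto simp: hyps_def)
      then show "real (card (lns I W)) = gbin ?q m 1" using lns_count_real[of I W] Suc.prems by simp
    qed
    finally have A: "real (card ?P) = real (card (hyps I U)) * gbin ?q m 1" by simp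
    have "real (card ?Q) = (\<Sum>L\<in>lns I U. real (card (hyps L U)))" by simp
    also have "\<dots> = (\<Sum>L\<in>lns I U. gbin ?q m 1)"
    proof (rule sum.cong[OF refl])
      fix L assume "L \<in> lns I U"
      then have "vec.subspace L" "L \<subseteq> U" "vec.dim U = vec.dim L + m" using Suc.prems by (auto simp: lns_def)
      then show "real (card (hyps L U)) = gbin ?q m 1" using Suc.IH[of L] Suc.prems False by simp
    qed
    also have "\<dots> = gbin ?q (Suc m) 1 * gbin ?q m 1"
      using lns_count_real[of I U] Suc.prems by simp
    finally have B: "real (card ?Q) = gbin ?q (Suc m) 1 * gbin ?q m 1" .
    have pos: "gbin ?q m 1 > 0"
    proof -
      have "real ?q ^ m > 1" using q2 False by (intro one_less_power) auto
      then show ?thesis using q2 unfolding gbin1 by (auto intro: divide_pos_pos)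
    qed
    show ?thesis using A B cPQ pos by simp
  qed
qed

lemma Er_D:
  fixes U :: "('a::{finite,field}^'n::finite) set"
  shows "U \<in> Er r \<Longrightarrow> vec.subspace U \<and> vec.dim U = r"
  by (simp add: Er_def)

lemma dI_eq:
  fixes U V :: "('a::{finite,field}^'n::finite) set"
  assumes "U \<in> Er r" "V \<in> Er r"
  shows "dI U V + vec.dim (U \<inter> V) = r"
proof -
  have u: "vec.subspace U" "vec.dim U = r" and v: "vec.subspace V" "vec.dim V = r"
    using assms by (auto simp: Er_def)
  have m: "vec.dim (vec.span (U \<union> V)) + vec.dim (U \<inter> V) = r + r"
    using modular[OF u(1) v(1)] u v by simp
  have k: "vec.dim U \<le> vec.dim (vec.span (U \<union> V))"
    by (rule vec.dim_subset) (meson Un_upper1 vec.span_superset order_trans)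
  show ?thesis unfolding dI_def u(2) v(2) min.idem using m k u(2) by linarith
qed

lemma dI_sym:
  fixes U V :: "('a::{finite,field}^'n::finite) set"
  shows "dI U V = dI V U"
  unfolding dI_def by (simp add: Un_commute min.commute)

lemma G_ineq:
  fixes V A B :: "('a::{finite,field}^'n::finite) set"
  assumes "vec.subspace V" "vec.subspace A" "vec.subspace B"
  shows "vec.dim (V \<inter> A) + vec.dim (V \<inter> B) \<le> vec.dim V + vec.dim (V \<inter> A \<inter> B)"
proof -
  have s1: "vec.subspace (V \<inter> A)" "vec.subspace (V \<inter> B)" using assms vec.subspace_inter by blast+
  have eqs: "(V \<inter> A) \<inter> (V \<inter> B) = V \<inter> A \<inter> B" by blast
  have "vec.dim (vec.span ((V \<inter> A) \<union> (V \<inter> B))) + vec.dim (V \<inter> A \<inter> B)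
        = vec.dim (V \<inter> A) + vec.dim (V \<inter> B)" using modular[OF s1] unfolding eqs .
  moreover have "vec.span ((V \<inter> A) \<union> (V \<inter> B)) \<subseteq> V" using assms by (intro vec.span_minimal) auto
  then have "vec.dim (vec.span ((V \<inter> A) \<union> (V \<inter> B))) \<le> vec.dim V" by (rule vec.dim_subset)
  ultimately show ?thesis by linarith
qed

lemma dI_tri:
  fixes U V X :: "('a::{finite,field}^'n::finite) set"
  assumes "U \<in> Er r" "V \<in> Er r" "X \<in> Er r"
  shows "dI U X \<le> dI U V + dI V X"
proof -
  have u: "vec.subspace U" "vec.dim U = r" and v: "vec.subspace V" "vec.dim V = r"
    and x: "vec.subspace X" "vec.dim X = r"
    using assms by (auto simp: Er_def)
  have g: "vec.dim (V \<inter> U) + vec.dim (V \<inter> X) \<le> vec.dim V + vec.dim (V \<inter> U \<inter> X)"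
    by (rule G_ineq[OF v(1) u(1) x(1)])
  have "vec.dim (V \<inter> U \<inter> X) \<le> vec.dim (U \<inter> X)" by (rule vec.dim_subset) blast
  moreover have c: "U \<inter> V = V \<inter> U" by blast
  ultimately show ?thesis using g dI_eq[OF assms(1,2), unfolded c] dI_eq[OF assms(2,3)] dI_eq[OF assms(1,3)] v(2)
    by linarith
qed

lemma countT_fwd:
  fixes U X W J :: "('a::{finite,field}^'n::finite) set"
  assumes U: "U \<in> Er r" and X: "X \<in> Er r"
    and W: "W \<in> hyps (U \<inter> X) U" and J: "J \<in> lns (U \<inter> X) X"
  shows "vec.span (W \<union> J) \<in> Er r \<and> vec.span (W \<union> J) \<inter> U = W \<and> vec.span (W \<union> J) \<inter> X = J"
proof -
  define I where "I = U \<inter> X"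
  define V where "V = vec.span (W \<union> J)"
  have u: "vec.subspace U" "vec.dim U = r" and x: "vec.subspace X" "vec.dim X = r"
    using U X by (auto simp: Er_def)
  have sI: "vec.subspace I" unfolding I_def using u x vec.subspace_inter by blast
  have w: "vec.subspace W" "I \<subseteq> W" "W \<subseteq> U" "vec.dim W + 1 = r" using W u by (auto simp: hyps_def I_def)
  have j: "vec.subspace J" "I \<subseteq> J" "J \<subseteq> X" "vec.dim J = vec.dim I + 1" using J by (auto simp: lns_def I_def)
  have WJ: "W \<inter> J = I" using w j unfolding I_def by blast
  have "vec.dim V + vec.dim I = vec.dim W + vec.dim J" using modular[OF w(1) j(1)] WJ V_def by simp
  then have dV: "vec.dim V = r" using w j by simp
  have sV: "vec.subspace V" unfolding V_def by simp
  have WV: "W \<subseteq> V" "J \<subseteq> V" unfolding V_def using vec.span_superset by blast+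
  have VU: "V \<inter> U = W"
  proof -
    have "\<not> vec.dim (V \<inter> U) \<ge> r"
    proof
      assume "vec.dim (V \<inter> U) \<ge> r"
      then have "V \<inter> U = V" using sub_eq[of "V \<inter> U" V] sV u vec.subspace_inter dV by auto
      then have "J \<subseteq> I" using WV j unfolding I_def by blast
      then have "vec.dim J \<le> vec.dim I" by (rule vec.dim_subset)
      then show False using j by simp
    qed
    then have "vec.dim (V \<inter> U) \<le> vec.dim W" using w by simp
    then show ?thesis using sub_eq[of W "V \<inter> U"] w WV sV u vec.subspace_inter by blast
  qed
  have VX: "V \<inter> X = J"
  proof -
    have g: "vec.dim (V \<inter> U) + vec.dim (V \<inter> X) \<le> vec.dim V + vec.dim (V \<inter> U \<inter> X)"
      by (rule G_ineq[OF sV u(1) x(1)])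
    have "vec.dim (W \<inter> X) \<le> vec.dim I" using w unfolding I_def by (intro vec.dim_subset) blast
    then have "vec.dim (V \<inter> X) \<le> vec.dim J" using g[unfolded VU] w j dV by linarith
    then show ?thesis using sub_eq[of J "V \<inter> X"] j WV sV x vec.subspace_inter by blast
  qed
  show ?thesis using dV sV VU VX unfolding V_def Er_def I_def by simp
qed

lemma countT_bwd:
  fixes U X V :: "('a::{finite,field}^'n::finite) set"
  assumes U: "U \<in> Er r" and X: "X \<in> Er r" and dUX: "dI U X = \<rho> + 1"
    and V: "V \<in> Er r" and h1: "dI X V \<le> \<rho>" and h2: "dI U V \<le> 1"
  shows "V \<inter> U \<in> hyps (U \<inter> X) U \<and> V \<inter> X \<in> lns (U \<inter> X) X \<and> vec.span ((V \<inter> U) \<union> (V \<inter> X)) = V"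
proof -
  define I where "I = U \<inter> X"
  have u: "vec.subspace U" "vec.dim U = r" and x: "vec.subspace X" "vec.dim X = r"
    and v: "vec.subspace V" "vec.dim V = r"
    using U X V by (auto simp: Er_def)
  have e1: "dI U X + vec.dim I = r" unfolding I_def by (rule dI_eq[OF U X])
  have e2: "dI X V + vec.dim (V \<inter> X) = r" using dI_eq[OF X V] by (simp add: Int_commute)
  have e3: "dI U V + vec.dim (V \<inter> U) = r" using dI_eq[OF U V] by (simp add: Int_commute)
  have g: "vec.dim (V \<inter> U) + vec.dim (V \<inter> X) \<le> vec.dim V + vec.dim (V \<inter> U \<inter> X)"
    by (rule G_ineq[OF v(1) u(1) x(1)])
  have sub: "V \<inter> U \<inter> X \<subseteq> I" unfolding I_def by blast
  have "vec.dim (V \<inter> U \<inter> X) \<le> vec.dim I" using sub by (rule vec.dim_subset)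
  then have d1: "vec.dim (V \<inter> U) + 1 = r" and d2: "vec.dim (V \<inter> X) = vec.dim I + 1"
    and d3: "vec.dim I \<le> vec.dim (V \<inter> U \<inter> X)"
    using g e1 e2 e3 h1 h2 dUX v by linarith+
  have sI: "vec.subspace I" unfolding I_def using u x vec.subspace_inter by blast
  have s3: "vec.subspace (V \<inter> U \<inter> X)" using u x v vec.subspace_inter by blast
  have eqI: "V \<inter> U \<inter> X = I" using sub_eq[OF s3 sI sub d3] .
  have sVU: "vec.subspace (V \<inter> U)" and sVX: "vec.subspace (V \<inter> X)" using u x v vec.subspace_inter by blast+
  have A: "V \<inter> U \<in> hyps I U" unfolding hyps_def using sVU d1 eqI u by auto
  have B: "V \<inter> X \<in> lns I X" unfolding lns_def using sVX d2 eqI by auto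
  have eqs: "(V \<inter> U) \<inter> (V \<inter> X) = I" using eqI by blast
  have "vec.dim (vec.span ((V \<inter> U) \<union> (V \<inter> X))) + vec.dim I
        = vec.dim (V \<inter> U) + vec.dim (V \<inter> X)" using modular[OF sVU sVX] unfolding eqs .
  then have ds: "vec.dim (vec.span ((V \<inter> U) \<union> (V \<inter> X))) = r" using d1 d2 by linarith
  have "vec.span ((V \<inter> U) \<union> (V \<inter> X)) \<subseteq> V" using v by (intro vec.span_minimal) auto
  then have "vec.span ((V \<inter> U) \<union> (V \<inter> X)) = V" using sub_eq ds v by (metis vec.subspace_span order_refl)
  then show ?thesis using A B unfolding I_def by simp
qed

lemma countT:
  fixes U X :: "('a::{finite,field}^'n::finite) set"
  assumes U: "U \<in> Er r" and X: "X \<in> Er r" and dUX: "dI U X = \<rho> + 1"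
  shows "real (card {V \<in> Er r. dI X V \<le> \<rho> \<and> dI U V \<le> 1}) = (gbin CARD('a) (\<rho>+1) 1)^2"
proof -
  define I where "I = U \<inter> X"
  let ?T = "{V \<in> Er r. dI X V \<le> \<rho> \<and> dI U V \<le> 1}"
  have u: "vec.subspace U" "vec.dim U = r" and x: "vec.subspace X" "vec.dim X = r"
    using U X by (auto simp: Er_def)
  have e1: "dI U X + vec.dim I = r" unfolding I_def by (rule dI_eq[OF U X])
  have sI: "vec.subspace I" unfolding I_def using u x vec.subspace_inter by blast
  have "bij_betw (\<lambda>(W,J). vec.span (W \<union> J)) (hyps I U \<times> lns I X) ?T"
  proof (rule bij_betw_byWitness[where f'="\<lambda>V. (V \<inter> U, V \<inter> X)"])
    show "\<forall>a\<in>hyps I U \<times> lns I X. (\<lambda>V. (V \<inter> U, V \<inter> X)) ((\<lambda>(W,J). vec.span (W \<union> J)) a) = a"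
      using countT_fwd[OF U X] unfolding I_def by auto
    show "\<forall>a'\<in>?T. (\<lambda>(W,J). vec.span (W \<union> J)) ((\<lambda>V. (V \<inter> U, V \<inter> X)) a') = a'"
      using countT_bwd[OF U X dUX] by auto
    show "(\<lambda>(W,J). vec.span (W \<union> J)) ` (hyps I U \<times> lns I X) \<subseteq> ?T"
    proof clarify
      fix W J assume W: "W \<in> hyps I U" and J: "J \<in> lns I X"
      let ?V = "vec.span (W \<union> J)"
      have f: "?V \<in> Er r" "?V \<inter> U = W" "?V \<inter> X = J" using countT_fwd[OF U X, of W J] W J unfolding I_def by auto
      have w: "vec.dim W + 1 = r" using W u by (auto simp: hyps_def)
      have j: "vec.dim J = vec.dim I + 1" using J by (auto simp: lns_def)
      have "dI X ?V + vec.dim J = r" using dI_eq[OF X f(1)] f(3) by (simp add: Int_commute)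
      moreover have "dI U ?V + vec.dim W = r" using dI_eq[OF U f(1)] f(2) by (simp add: Int_commute)
      ultimately show "?V \<in> Er r \<and> dI X ?V \<le> \<rho> \<and> dI U ?V \<le> 1" using f(1) w j e1 dUX by linarith
    qed
    show "(\<lambda>V. (V \<inter> U, V \<inter> X)) ` ?T \<subseteq> hyps I U \<times> lns I X"
      using countT_bwd[OF U X dUX] unfolding I_def by auto
  qed
  then have "card ?T = card (hyps I U) * card (lns I X)"
    by (simp add: bij_betw_same_card[symmetric] card_cartesian_product)
  moreover have "real (card (hyps I U)) = gbin CARD('a) (\<rho>+1) 1"
    using hyps_count[OF sI u(1), of "\<rho>+1"] e1 dUX u unfolding I_def by auto
  moreover have "real (card (lns I X)) = gbin CARD('a) (\<rho>+1) 1"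
    using lns_count_real[OF sI x(1)] e1 dUX x unfolding I_def by auto
  ultimately show ?thesis by (simp add: power2_eq_square)
qed

lemma W_facts:
  fixes U C0 W :: "('a::{finite,field}^'n::finite) set"
  assumes U: "U \<in> Er r" and C: "C0 \<in> Er r"
    and W1: "W \<in> hyps {0} U" and W2: "W \<notin> hyps (U \<inter> C0) U"
  shows "vec.subspace W \<and> W \<subseteq> U \<and> vec.dim W + 1 = r \<and> vec.dim (W \<inter> C0) + 1 = vec.dim (U \<inter> C0)
     \<and> vec.dim (vec.span (W \<union> C0)) + vec.dim (U \<inter> C0) = r + r
     \<and> U \<subseteq> vec.span (W \<union> C0) \<and> W \<subseteq> vec.span (W \<union> C0)"
proof -
  define I where "I = U \<inter> C0"
  have u: "vec.subspace U" "vec.dim U = r" and c: "vec.subspace C0" "vec.dim C0 = r"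
    using U C by (auto simp: Er_def)
  have sI: "vec.subspace I" unfolding I_def using u c vec.subspace_inter by blast
  have w: "vec.subspace W" "W \<subseteq> U" "vec.dim W + 1 = r" using W1 u by (auto simp: hyps_def)
  have nI: "\<not> I \<subseteq> W" using W2 w u unfolding I_def hyps_def by auto
  define S1 where "S1 = vec.span (W \<union> I)"
  have sS1: "vec.subspace S1" unfolding S1_def by simp
  have S1U: "S1 \<subseteq> U" unfolding S1_def I_def using u w by (intro vec.span_minimal) auto
  have WS1: "W \<subseteq> S1" "I \<subseteq> S1" unfolding S1_def using vec.span_superset by blast+
  have "\<not> vec.dim S1 \<le> vec.dim W"
  proof
    assume "vec.dim S1 \<le> vec.dim W"
    then have "W = S1" using sub_eq[OF w(1) sS1 WS1(1)] by simp
    then show False using nI WS1(2) by simp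
  qed
  then have "vec.dim U \<le> vec.dim S1" using w u by simp
  then have S1eq: "S1 = U" using sub_eq[OF sS1 u(1) S1U] by simp
  have m1: "vec.dim (vec.span (W \<union> I)) + vec.dim (W \<inter> I) = vec.dim W + vec.dim I" by (rule modular[OF w(1) sI])
  have WI: "W \<inter> I = W \<inter> C0" unfolding I_def using w by blast
  have d1: "vec.dim (W \<inter> C0) + 1 = vec.dim I" using m1 S1eq[unfolded S1_def] WI w u by simp
  have m2: "vec.dim (vec.span (W \<union> C0)) + vec.dim (W \<inter> C0) = vec.dim W + vec.dim C0" by (rule modular[OF w(1) c(1)])
  have "U \<subseteq> vec.span (W \<union> C0)" using S1eq unfolding S1_def I_def by (metis Int_lower2 Un_mono order_refl vec.span_mono)
  moreover have "W \<subseteq> vec.span (W \<union> C0)" using vec.span_superset by blast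
  ultimately show ?thesis using w d1 m2 c unfolding I_def by simp
qed

lemma countS_fwd:
  fixes U C0 V :: "('a::{finite,field}^'n::finite) set"
  assumes U: "U \<in> Er r" and C: "C0 \<in> Er r" and dUC: "dI U C0 = \<rho>"
    and V: "V \<in> Er r" and h1: "dI U V \<le> 1" and h2: "\<not> dI C0 V \<le> \<rho>"
  shows "V \<inter> U \<in> hyps {0} U - hyps (U \<inter> C0) U \<and>
         V \<in> lns (V \<inter> U) UNIV - lns (V \<inter> U) (vec.span ((V \<inter> U) \<union> C0))"
proof -
  define I where "I = U \<inter> C0"
  have u: "vec.subspace U" "vec.dim U = r" and c: "vec.subspace C0" "vec.dim C0 = r"
    and v: "vec.subspace V" "vec.dim V = r"
    using U C V by (auto simp: Er_def)
  have e1: "dI U C0 + vec.dim I = r" unfolding I_def by (rule dI_eq[OF U C])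
  have e2: "dI C0 V + vec.dim (V \<inter> C0) = r" using dI_eq[OF C V] by (simp add: Int_commute)
  have e3: "dI U V + vec.dim (V \<inter> U) = r" using dI_eq[OF U V] by (simp add: Int_commute)
  have lt: "vec.dim (V \<inter> C0) < vec.dim I" using e1 e2 h2 dUC by linarith
  have sVU: "vec.subspace (V \<inter> U)" and sVC: "vec.subspace (V \<inter> C0)" using u v c vec.subspace_inter by blast+
  have "\<not> vec.dim (V \<inter> U) \<ge> r"
  proof
    assume a: "vec.dim (V \<inter> U) \<ge> r"
    have "V \<inter> U = V" using sub_eq[OF sVU v(1)] a v by auto
    moreover have "V \<inter> U = U" using sub_eq[OF sVU u(1)] a u by auto
    ultimately have "V = U" by simp
    then have "V \<inter> C0 = I" unfolding I_def by simp
    then show False using lt by simp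
  qed
  then have dW: "vec.dim (V \<inter> U) + 1 = r" using e3 h1 by linarith
  have A: "V \<inter> U \<in> hyps {0} U" unfolding hyps_def using sVU dW u vec.subspace_0[OF sVU] by auto
  have B: "V \<inter> U \<notin> hyps I U"
  proof
    assume "V \<inter> U \<in> hyps I U"
    then have "I \<subseteq> V \<inter> C0" unfolding hyps_def I_def by auto
    then have "vec.dim I \<le> vec.dim (V \<inter> C0)" by (rule vec.dim_subset)
    then show False using lt by simp
  qed
  have Cc: "V \<in> lns (V \<inter> U) UNIV" unfolding lns_def using v dW by auto
  have D: "V \<notin> lns (V \<inter> U) (vec.span ((V \<inter> U) \<union> C0))"
  proof
    assume "V \<in> lns (V \<inter> U) (vec.span ((V \<inter> U) \<union> C0))"
    then have Vs: "V \<subseteq> vec.span ((V \<inter> U) \<union> C0)" unfolding lns_def by auto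
    have wf: "vec.dim (vec.span ((V \<inter> U) \<union> C0)) + vec.dim I = r + r"
      using W_facts[OF U C A B[unfolded I_def]] unfolding I_def by blast
    have "vec.span (V \<union> C0) \<subseteq> vec.span ((V \<inter> U) \<union> C0)"
      using Vs vec.span_superset[of "(V \<inter> U) \<union> C0"] by (intro vec.span_minimal) auto
    then have le: "vec.dim (vec.span (V \<union> C0)) \<le> vec.dim (vec.span ((V \<inter> U) \<union> C0))" by (rule vec.dim_subset)
    have "vec.dim (vec.span (V \<union> C0)) + vec.dim (V \<inter> C0) = vec.dim V + vec.dim C0" by (rule modular[OF v(1) c(1)])
    then show False using le wf lt v c by linarith
  qed
  show ?thesis using A B Cc D unfolding I_def by blast
qed

lemma countS_bwd:
  fixes U C0 W V :: "('a::{finite,field}^'n::finite) set"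
  assumes U: "U \<in> Er r" and C: "C0 \<in> Er r" and dUC: "dI U C0 = \<rho>"
    and W: "W \<in> hyps {0} U - hyps (U \<inter> C0) U"
    and V: "V \<in> lns W UNIV - lns W (vec.span (W \<union> C0))"
  shows "V \<in> Er r \<and> dI U V \<le> 1 \<and> \<not> dI C0 V \<le> \<rho> \<and> V \<inter> U = W"
proof -
  define I where "I = U \<inter> C0"
  have u: "vec.subspace U" "vec.dim U = r" and c: "vec.subspace C0" "vec.dim C0 = r"
    using U C by (auto simp: Er_def)
  have wf: "vec.subspace W" "W \<subseteq> U" "vec.dim W + 1 = r" "vec.dim (W \<inter> C0) + 1 = vec.dim I"
     "vec.dim (vec.span (W \<union> C0)) + vec.dim I = r + r"
     "U \<subseteq> vec.span (W \<union> C0)" "W \<subseteq> vec.span (W \<union> C0)"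
    using W_facts[OF U C] W unfolding I_def by auto
  have v: "vec.subspace V" "W \<subseteq> V" "vec.dim V = r" and nV: "\<not> V \<subseteq> vec.span (W \<union> C0)"
    using V wf unfolding lns_def by auto
  have VE: "V \<in> Er r" using v by (simp add: Er_def)
  have sVU: "vec.subspace (V \<inter> U)" using u v vec.subspace_inter by blast
  have "\<not> vec.dim (V \<inter> U) \<ge> r"
  proof
    assume a: "vec.dim (V \<inter> U) \<ge> r"
    have "V \<inter> U = V" using sub_eq[OF sVU v(1)] a v by auto
    then show False using nV wf(6) by blast
  qed
  then have "vec.dim (V \<inter> U) \<le> vec.dim W" using wf by linarith
  then have VU: "V \<inter> U = W" using sub_eq[OF wf(1) sVU] v wf by blast
  have e1: "dI U C0 + vec.dim I = r" unfolding I_def by (rule dI_eq[OF U C])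
  have e2: "dI C0 V + vec.dim (V \<inter> C0) = r" using dI_eq[OF C VE] by (simp add: Int_commute)
  have e3: "dI U V + vec.dim (V \<inter> U) = r" using dI_eq[OF U VE] by (simp add: Int_commute)
  have d1: "dI U V \<le> 1" using e3[unfolded VU] wf by linarith
  have d2: "\<not> dI C0 V \<le> \<rho>"
  proof
    assume "dI C0 V \<le> \<rho>"
    then have ge: "vec.dim I \<le> vec.dim (V \<inter> C0)" using e1 e2 dUC by linarith
    have "\<not> V \<inter> C0 \<subseteq> W"
    proof
      assume "V \<inter> C0 \<subseteq> W"
      then have "V \<inter> C0 \<subseteq> W \<inter> C0" by blast
      then have "vec.dim (V \<inter> C0) \<le> vec.dim (W \<inter> C0)" by (rule vec.dim_subset)
      then show False using ge wf(4) by linarith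
    qed
    then obtain x where x: "x \<in> V" "x \<in> C0" "x \<notin> W" by blast
    have s1: "vec.span (insert x W) \<subseteq> V" using x v by (intro vec.span_minimal) auto
    have "vec.dim (vec.span (insert x W)) = vec.dim V" using dim_insert_sub[OF wf(1) x(3)] v wf by simp
    then have "vec.span (insert x W) = V" using sub_eq[OF _ v(1) s1] by simp
    moreover have "vec.span (insert x W) \<subseteq> vec.span (W \<union> C0)" using x by (intro vec.span_mono) auto
    ultimately show False using nV by simp
  qed
  show ?thesis using VE d1 d2 VU by simp
qed

lemma countS:
  fixes U C0 :: "('a::{finite,field}^'n::finite) set"
  assumes U: "U \<in> Er r" and C: "C0 \<in> Er r" and dUC: "dI U C0 = \<rho>"
    and rho: "0 < \<rho>" "\<rho> < r" and rn: "r \<le> CARD('n)"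
  shows "real (card {V \<in> Er r. dI U V \<le> 1 \<and> \<not> dI C0 V \<le> \<rho>})
     = (gbin CARD('a) r 1 - gbin CARD('a) \<rho> 1) * (gbin CARD('a) (CARD('n) + 1 - r) 1 - gbin CARD('a) (\<rho>+1) 1)"
proof -
  define I where "I = U \<inter> C0"
  let ?S = "{V \<in> Er r. dI U V \<le> 1 \<and> \<not> dI C0 V \<le> \<rho>}"
  let ?H = "hyps {0} U - hyps I U"
  let ?G = "\<lambda>W. lns W UNIV - lns W (vec.span (W \<union> C0))"
  have u: "vec.subspace U" "vec.dim U = r" and c: "vec.subspace C0" "vec.dim C0 = r"
    using U C by (auto simp: Er_def)
  have e1: "dI U C0 + vec.dim I = r" unfolding I_def by (rule dI_eq[OF U C])
  have sI: "vec.subspace I" unfolding I_def using u c vec.subspace_inter by blast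
  have "bij_betw (\<lambda>V. (V \<inter> U, V)) ?S (Sigma ?H ?G)"
  proof (rule bij_betw_byWitness[where f'=snd])
    show "\<forall>a\<in>?S. snd (a \<inter> U, a) = a" by simp
    show "\<forall>a'\<in>Sigma ?H ?G. (snd a' \<inter> U, snd a') = a'"
      using countS_bwd[OF U C dUC] unfolding I_def by auto
    show "(\<lambda>V. (V \<inter> U, V)) ` ?S \<subseteq> Sigma ?H ?G"
      using countS_fwd[OF U C dUC] unfolding I_def by auto
    show "snd ` Sigma ?H ?G \<subseteq> ?S"
      using countS_bwd[OF U C dUC] unfolding I_def by auto
  qed
  then have "card ?S = card (Sigma ?H ?G)" by (rule bij_betw_same_card)
  also have "\<dots> = (\<Sum>W\<in>?H. card (?G W))" by simp
  finally have cS: "real (card ?S) = (\<Sum>W\<in>?H. real (card (?G W)))" by simp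
  have cG: "real (card (?G W)) = gbin CARD('a) (CARD('n) + 1 - r) 1 - gbin CARD('a) (\<rho>+1) 1"
    if W: "W \<in> ?H" for W
  proof -
    have wf: "vec.subspace W" "W \<subseteq> U" "vec.dim W + 1 = r" "vec.dim (W \<inter> C0) + 1 = vec.dim I"
       "vec.dim (vec.span (W \<union> C0)) + vec.dim I = r + r"
       "U \<subseteq> vec.span (W \<union> C0)" "W \<subseteq> vec.span (W \<union> C0)"
      using W_facts[OF U C] W unfolding I_def by auto
    have sub: "lns W (vec.span (W \<union> C0)) \<subseteq> lns W UNIV" unfolding lns_def by auto
    have "card (?G W) = card (lns W UNIV) - card (lns W (vec.span (W \<union> C0)))"
      using sub by (intro card_Diff_subset) auto
    moreover have "card (lns W (vec.span (W \<union> C0))) \<le> card (lns W UNIV)" using sub by (intro card_mono) auto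
    ultimately have "real (card (?G W)) = real (card (lns W UNIV)) - real (card (lns W (vec.span (W \<union> C0))))"
      by (simp add: of_nat_diff)
    moreover have "real (card (lns W UNIV)) = gbin CARD('a) (CARD('n) + 1 - r) 1"
    proof -
      have du: "vec.dim (UNIV::('a^'n) set) - vec.dim W = CARD('n) + 1 - r"
        using dimUNIV[where 'a='a and 'n='n] wf(3) by linarith
      show ?thesis using lns_count_real[OF wf(1) vec.subspace_UNIV subset_UNIV] unfolding du .
    qed
    moreover have "real (card (lns W (vec.span (W \<union> C0)))) = gbin CARD('a) (\<rho>+1) 1"
    proof -
      have "vec.dim (vec.span (W \<union> C0)) - vec.dim W = \<rho> + 1" using wf(3,5) e1 dUC by linarith
      then show ?thesis using lns_count_real[OF wf(1) vec.subspace_span wf(7)] by simp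
    qed
    ultimately show ?thesis by simp
  qed
  have hsub: "hyps I U \<subseteq> hyps {0} U" unfolding hyps_def using vec.subspace_0 by auto
  have "card ?H = card (hyps {0} U) - card (hyps I U)" using hsub by (intro card_Diff_subset) auto
  moreover have "card (hyps I U) \<le> card (hyps {0} U)" using hsub by (intro card_mono) auto
  ultimately have cH1: "real (card ?H) = real (card (hyps {0} U)) - real (card (hyps I U))"
    by (simp add: of_nat_diff)
  have "real (card (hyps {0} U)) = gbin CARD('a) r 1"
    using hyps_count[OF vec.subspace_single_0 u(1), of r] u rho vec.subspace_0[OF u(1)] by simp
  moreover have "real (card (hyps I U)) = gbin CARD('a) \<rho> 1"
    using hyps_count[OF sI u(1), of \<rho>] u rho e1 dUC unfolding I_def by auto
  ultimately have cH: "real (card ?H) = gbin CARD('a) r 1 - gbin CARD('a) \<rho> 1" using cH1 by simp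
  have "real (card ?S) = (\<Sum>W\<in>?H. gbin CARD('a) (CARD('n) + 1 - r) 1 - gbin CARD('a) (\<rho>+1) 1)"
    unfolding cS by (rule sum.cong[OF refl]) (rule cG)
  then show ?thesis using cH by simp
qed



lemma bb_id:
  assumes q: "q \<ge> 2" and rr: "\<rho> < r" and rn: "r + \<rho> \<le> n"
  shows "(gbin q r 1 - gbin q \<rho> 1) * (gbin q (n + 1 - r) 1 - gbin q (\<rho>+1) 1) = bb q n r \<rho>"
proof -
  obtain a where a: "r = \<rho> + a" using rr by (metis less_imp_add_positive)
  obtain b where b: "n = r + \<rho> + b" using rn by (metis le_add_diff_inverse)
  have e1: "n + 1 - r = (\<rho> + 1) + b" using b by simp
  have e2: "r - \<rho> = a" using a by simp
  have e3: "n - r - \<rho> = b" using b by simp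
  have qq: "real q - 1 \<noteq> 0" using q by simp
  have h: "gbin q (m + k) 1 - gbin q m 1 = real q ^ m * gbin q k 1" for m k
  proof -
    have "(real q^(m+k) - 1)/(real q - 1) - (real q^m - 1)/(real q - 1) = (real q^m * (real q^k - 1))/(real q - 1)"
      by (simp add: diff_divide_distrib[symmetric] power_add algebra_simps)
    then show ?thesis unfolding gbin1 by simp
  qed
  have p: "real q ^ (2 * \<rho> + 1) = real q ^ \<rho> * real q ^ (\<rho> + 1)"
    by (simp add: power_add[symmetric] mult_2)
  show ?thesis unfolding bb_def e1 e2 e3 p unfolding a h by simp
qed

theorem lemma11:
  fixes C :: "('a::{finite,field}^'n::finite) set set"
    and r \<rho> :: nat
  defines "q \<equiv> CARD('a)" and "n \<equiv> CARD('n)"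
  assumes "r \<le> n div 2" and "0 < \<rho>" and "\<rho> < r"
    and "C \<subseteq> Er r" and "C \<noteq> {}"
    and "covering_radius r C = \<rho>"
    and "U \<in> {U \<in> Er r. dIC U C = \<rho>} - {Z \<in> Er r. excess r \<rho> C {Z} \<ge> 1}"
  shows "real_of_int (excess r \<rho> C (ballI r 1 U))
           \<ge> of_int \<lceil>bb q n r \<rho> / cc q (\<rho>+1)\<rceil> * cc q (\<rho>+1) - bb q n r \<rho>"
proof -
  have UE: "U \<in> Er r" and dU: "dIC U C = \<rho>" and nZ: "\<not> 1 \<le> excess r \<rho> C {U}"
    using assms(9) by auto
  have finC: "finite C" by simp
  have CE: "\<And>X. X \<in> C \<Longrightarrow> X \<in> Er r" using assms(6) by blast
  have "dIC U C \<in> (\<lambda>X. dI U X) ` C" unfolding dIC_def using finC assms(7) by (intro Min_in) auto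
  then obtain C0 where C0: "C0 \<in> C" "dI U C0 = \<rho>" using dU by auto
  have C0E: "C0 \<in> Er r" using CE C0 by blast
  have low: "\<rho> \<le> dI U X" if "X \<in> C" for X
    using dU that finC unfolding dIC_def by (metis Min_le finite_imageI imageI)
  have cov: "\<exists>X\<in>C. dI V X \<le> \<rho>" if V: "V \<in> Er r" for V
  proof -
    have "dIC V C \<le> \<rho>" using assms(8) V unfolding covering_radius_def
      by (metis Max_ge finite_imageI imageI finite)
    moreover have "dIC V C \<in> (\<lambda>X. dI V X) ` C" unfolding dIC_def using finC assms(7) by (intro Min_in) auto
    ultimately show ?thesis by auto
  qed
  have oth: "\<rho> < dI U X" if X: "X \<in> C" "X \<noteq> C0" for X
  proof (rule ccontr)
    assume "\<not> \<rho> < dI U X"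
    then have dX: "dI U X \<le> \<rho>" by simp
    let ?f = "\<lambda>Y. int (card (ballI r \<rho> Y \<inter> {U}))"
    have f1: "?f Y = 1" if "Y \<in> C" "dI U Y \<le> \<rho>" for Y
    proof -
      have "ballI r \<rho> Y \<inter> {U} = {U}" using that UE dI_sym[of Y U] unfolding ballI_def by auto
      then show ?thesis by simp
    qed
    have "(\<Sum>Y\<in>{C0, X}. ?f Y) \<le> (\<Sum>Y\<in>C. ?f Y)"
      using C0 X finC by (intro sum_mono2) auto
    moreover have "(\<Sum>Y\<in>{C0, X}. ?f Y) = 2" using X C0 f1 dX by simp
    ultimately have "1 \<le> excess r \<rho> C {U}" unfolding excess_def by simp
    then show False using nZ by simp
  qed
  define B where "B = ballI r 1 U"
  define M where "M = {X \<in> C. dI U X = \<rho> + 1}"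
  define c where "c = cc q (\<rho>+1)"
  define b where "b = bb q n r \<rho>"
  have finM: "finite M" by simp
  have rn: "r + \<rho> \<le> n" using assms(3,5) n_def by linarith
  have cM: "real (card (ballI r \<rho> X \<inter> B)) = c" if X: "X \<in> M" for X
  proof -
    have "ballI r \<rho> X \<inter> B = {V \<in> Er r. dI X V \<le> \<rho> \<and> dI U V \<le> 1}"
      unfolding ballI_def B_def by auto
    then show ?thesis using countT[OF UE CE, of X \<rho>] X unfolding M_def c_def cc_def q_def by auto
  qed
  have zero: "card (ballI r \<rho> X \<inter> B) = 0" if X: "X \<in> C - {C0} - M" for X
  proof -
    have "ballI r \<rho> X \<inter> B = {}"
    proof (rule ccontr)
      assume "ballI r \<rho> X \<inter> B \<noteq> {}"
      then obtain V where V: "V \<in> Er r" "dI X V \<le> \<rho>" "dI U V \<le> 1" unfolding ballI_def B_def by auto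
      have "dI U X \<le> dI U V + dI V X" using dI_tri[OF UE V(1) CE] X by auto
      then have "dI U X \<le> \<rho> + 1" using V dI_sym[of V X] by simp
      moreover have "\<rho> < dI U X" using oth X by auto
      ultimately show False using X unfolding M_def by auto
    qed
    then show ?thesis by simp
  qed
  define S where "S = B - ballI r \<rho> C0"
  have Seq: "S = {V \<in> Er r. dI U V \<le> 1 \<and> \<not> dI C0 V \<le> \<rho>}" unfolding S_def B_def ballI_def by auto
  have cS: "real (card S) = b"
  proof -
    have "r \<le> CARD('n)" using rn n_def by simp
    then have "real (card S) = (gbin q r 1 - gbin q \<rho> 1) * (gbin q (n + 1 - r) 1 - gbin q (\<rho>+1) 1)"
      unfolding Seq using countS[OF UE C0E C0(2) assms(4,5)] q_def n_def by simp
    also have "\<dots> = b" unfolding b_def by (rule bb_id) (use q_ge2 q_def assms(5) rn in auto)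
    finally show ?thesis .
  qed
  have cB: "card B = card (B \<inter> ballI r \<rho> C0) + card S"
  proof -
    have "card S = card B - card (B \<inter> ballI r \<rho> C0)" unfolding S_def by (rule card_Diff_subset_Int) simp
    moreover have "card (B \<inter> ballI r \<rho> C0) \<le> card B" by (rule card_mono) auto
    ultimately show ?thesis by simp
  qed
  have sumC: "(\<Sum>X\<in>C. real (card (ballI r \<rho> X \<inter> B)))
      = real (card (ballI r \<rho> C0 \<inter> B)) + real (card M) * c"
  proof -
    have "(\<Sum>X\<in>C. real (card (ballI r \<rho> X \<inter> B)))
        = real (card (ballI r \<rho> C0 \<inter> B)) + (\<Sum>X\<in>C - {C0}. real (card (ballI r \<rho> X \<inter> B)))"
      using C0 finC by (simp add: sum.remove)
    moreover have "(\<Sum>X\<in>C - {C0}. real (card (ballI r \<rho> X \<inter> B))) = (\<Sum>X\<in>M. real (card (ballI r \<rho> X \<inter> B)))"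
    proof (rule sum.mono_neutral_right)
      show "finite (C - {C0})" by simp
      show "M \<subseteq> C - {C0}" unfolding M_def using C0 by auto
      show "\<forall>i\<in>C - {C0} - M. real (card (ballI r \<rho> i \<inter> B)) = 0" using zero by simp
    qed
    moreover have "(\<Sum>X\<in>M. real (card (ballI r \<rho> X \<inter> B))) = real (card M) * c" using cM by simp
    ultimately show ?thesis by simp
  qed
  have ex: "real_of_int (excess r \<rho> C B) = real (card M) * c - b"
  proof -
    have "real_of_int (excess r \<rho> C B) = (\<Sum>X\<in>C. real (card (ballI r \<rho> X \<inter> B))) - real (card B)"
      unfolding excess_def by simp
    also have "\<dots> = real (card M) * c - b" using sumC cB cS by (simp add: Int_commute)
    finally show ?thesis .
  qed
  have bound: "b \<le> real (card M) * c"
  proof -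
    have "S \<subseteq> (\<Union>X\<in>M. ballI r \<rho> X \<inter> B)"
    proof
      fix V assume V: "V \<in> S"
      then have VE: "V \<in> Er r" and V1: "dI U V \<le> 1" and V2: "\<not> dI C0 V \<le> \<rho>" unfolding Seq by auto
      obtain X where X: "X \<in> C" "dI V X \<le> \<rho>" using cov[OF VE] by blast
      have "X \<noteq> C0" using X V2 dI_sym[of V X] by auto
      then have "\<rho> < dI U X" using oth X by simp
      moreover have "dI U X \<le> dI U V + dI V X" using dI_tri[OF UE VE CE[OF X(1)]] .
      ultimately have "X \<in> M" using X V1 unfolding M_def by simp
      moreover have "V \<in> ballI r \<rho> X \<inter> B" using V VE X dI_sym[of V X] unfolding S_def ballI_def by auto
      ultimately show "V \<in> (\<Union>X\<in>M. ballI r \<rho> X \<inter> B)" by blast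
    qed
    then have "card S \<le> card (\<Union>X\<in>M. ballI r \<rho> X \<inter> B)" by (intro card_mono) auto
    also have "\<dots> \<le> (\<Sum>X\<in>M. card (ballI r \<rho> X \<inter> B))" by (rule card_UN_le[OF finM])
    finally have "real (card S) \<le> (\<Sum>X\<in>M. real (card (ballI r \<rho> X \<inter> B)))"
      by (metis of_nat_le_iff of_nat_sum)
    then show ?thesis using cS cM by simp
  qed
  have cpos: "c > 0"
  proof -
    have "real q ^ (\<rho>+1) > 1" using q_ge2[where 'a='a] q_def by (intro one_less_power) auto
    then have "gbin q (\<rho>+1) 1 > 0" using q_ge2[where 'a='a] q_def unfolding gbin1 by (auto intro: divide_pos_pos)
    then show ?thesis unfolding c_def cc_def by simp
  qed
  have "b / c \<le> real_of_int (int (card M))" using bound cpos by (simp add: divide_le_eq)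
  then have "\<lceil>b / c\<rceil> \<le> int (card M)" by (rule ceiling_le)
  then have "real_of_int \<lceil>b / c\<rceil> * c \<le> real (card M) * c" using cpos
    by (metis of_int_le_iff of_int_of_nat_eq mult_right_mono less_imp_le)
  then show ?thesis using ex[unfolded B_def] unfolding b_def c_def by linarith
qed

end
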